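(* Let $m \ge 2$, let $\varepsilon \le \frac{1}{2^{3m}\cdot 4m}$ be a power of 2, and let $\mathcal{G} = \{2^{-i}\varepsilon j : i \in \mathbb{Z},\ j \in \{1,\dots,2/\varepsilon^2 - 1\}\} \cap (0,1)$. Suppose $z, x_1,\dots,x_m \in \mathcal{G}$, let $M = \max_i x_i$, and suppose $\varepsilon M \le z \le \min_i x_i$. Then there exist $a_1,\dots,a_m,b_1,\dots,b_m$ such that for every $i$: (i) $a_i, b_i \in \mathcal{G} \cup \{0\}$; (ii) $x_i = z + a_i + b_i$; (iii) each of $a_i, b_i$ is either $0$ or at least $\varepsilon^3 M/2$; and (iv) $a_i \le \varepsilon z$. *)

theory Defs
  imports Complex_Main
begin

definition grid :: "real \<Rightarrow> real set" where
  "grid \<epsilon> = {y. \<exists>(i::int) (j::nat). 1 \<le> j \<and> real j \<le> 2 / \<epsilon>^2 - 1 \<and>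
                    y = (2::real) powi (- i) * \<epsilon> * real j} \<inter> {0<..<1}"

end

theory Submission
  imports Defs
begin

lemma grid_char:
  assumes e: "\<epsilon> = (2::real) powi k"
  shows "y \<in> grid \<epsilon> \<longleftrightarrow> (\<exists>(t::int) (j::nat). 1 \<le> j \<and> real j \<le> 2/\<epsilon>^2 - 1 \<and> y = 2 powi t * real j) \<and> 0 < y \<and> y < 1"
proof -
  have ee: "(2::real) powi (-i) * \<epsilon> = 2 powi (k - i)" for i
    using power_int_add[of "2::real" "-i" k] by (simp add: e)
  show ?thesis
  proof
    assume "y \<in> grid \<epsilon>"
    then obtain i j where "1 \<le> j" "real j \<le> 2 / \<epsilon>^2 - 1" "y = (2::real) powi (- i) * \<epsilon> * real j" "0 < y" "y < 1"
      unfolding grid_def by auto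
    then show "(\<exists>(t::int) (j::nat). 1 \<le> j \<and> real j \<le> 2/\<epsilon>^2 - 1 \<and> y = 2 powi t * real j) \<and> 0 < y \<and> y < 1"
      using ee by metis
  next
    assume "(\<exists>(t::int) (j::nat). 1 \<le> j \<and> real j \<le> 2/\<epsilon>^2 - 1 \<and> y = 2 powi t * real j) \<and> 0 < y \<and> y < 1"
    then obtain t j where h: "1 \<le> j" "real j \<le> 2/\<epsilon>^2 - 1" "y = 2 powi t * real j" "0 < y" "y < 1" by blast
    have "y = (2::real) powi (- (k - t)) * \<epsilon> * real j" using ee[of "k - t"] h(3) by simp
    then show "y \<in> grid \<epsilon>" unfolding grid_def using h(1,2,4,5)
      by (intro IntI CollectI exI[of _ "k-t"] exI[of _ j]) auto
  qed
qed

lemma core: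
  fixes \<epsilon> z x M :: real and k :: int
  assumes e: "\<epsilon> = 2 powi k" and e1: "\<epsilon> \<le> 1" and zg: "z \<in> grid \<epsilon>" and xg: "x \<in> grid \<epsilon>"
    and eMz: "\<epsilon>*M \<le> z" and zx: "z \<le> x" and xM: "x \<le> M"
  shows "\<exists>a b. a \<in> grid \<epsilon> \<union> {0} \<and> b \<in> grid \<epsilon> \<union> {0} \<and> x = z + a + b \<and>
           (a = 0 \<or> a \<ge> \<epsilon>^3 * M / 2) \<and> (b = 0 \<or> b \<ge> \<epsilon>^3 * M / 2) \<and> a \<le> \<epsilon> * z"
proof -
  have ep: "\<epsilon> > 0" using e by simp
  have k0: "k \<le> 0"
  proof (rule ccontr)
    assume "\<not> k \<le> 0"
    then have "(2::real) powi 1 \<le> 2 powi k" by (intro power_int_increasing) auto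
    then show False using e e1 by simp
  qed
  define N where "N = (2::nat)^nat(1 - 2*k)"
  have "real N = (2::real) powi (1 - 2*k)" unfolding N_def using k0
    by (simp add: power_int_def)
  also have "\<dots> = 2 powi 1 / 2 powi (k * 2)" by (subst power_int_diff) (auto simp: mult.commute)
  also have "\<dots> = 2 / \<epsilon>^2" by (simp add: e power_int_mult)
  finally have NN: "real N = 2 / \<epsilon>^2" .
  obtain tz Z where Z: "1 \<le> Z" "real Z \<le> 2/\<epsilon>^2 - 1" "z = 2 powi tz * real Z" and z0: "0<z" "z<1"
    using zg grid_char[OF e] by blast
  obtain tx X where X: "1 \<le> X" "real X \<le> 2/\<epsilon>^2 - 1" "x = 2 powi tx * real X" and x0: "0<x" "x<1"
    using xg grid_char[OF e] by blast
  have M0: "M > 0" using x0 xM by simp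
  have ulp: "2 powi t \<ge> \<epsilon>^3*M/2" if "y = 2 powi t * real J" "real J \<le> 2/\<epsilon>^2 - 1" "\<epsilon>*M \<le> y" for y t J
  proof -
    have pt: "(2::real) powi t > 0" by simp
    have "real J < 2/\<epsilon>^2" using that(2) by simp
    then have "2 powi t * real J < 2 powi t * (2/\<epsilon>^2)" using pt by (rule mult_strict_left_mono)
    then have "y < 2 powi t * (2/\<epsilon>^2)" using that(1) by simp
    then have "y * \<epsilon>^2 / 2 < 2 powi t" using ep by (simp add: field_simps)
    moreover have "\<epsilon>*M*\<epsilon>^2 \<le> y*\<epsilon>^2" using that(3) by (intro mult_right_mono) auto
    moreover have "\<epsilon>^3*M = \<epsilon>*M*\<epsilon>^2" by (simp add: power2_eq_square power3_eq_cube)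
    ultimately show ?thesis by linarith
  qed
  have uz: "2 powi tz \<ge> \<epsilon>^3*M/2" using ulp[OF Z(3) Z(2) eMz] .
  have ux: "2 powi tx \<ge> \<epsilon>^3*M/2" using ulp[OF X(3) X(2)] eMz zx by simp
  define tm where "tm = min tx tz"
  define u :: real where "u = 2 powi tm"
  have u0: "u > 0" unfolding u_def by simp
  have uM: "u \<ge> \<epsilon>^3*M/2" unfolding u_def tm_def using ux uz by (simp add: min_def)
  have pw: "(2::real) powi t = u * 2^nat(t - tm)" if "tm \<le> t" for t
  proof -
    have "(2::real) powi t = 2 powi (tm + int (nat (t - tm)))" using that by simp
    also have "\<dots> = u * 2^nat(t - tm)" unfolding u_def by (subst power_int_add) (auto simp: power_int_nonneg_exp)
    finally show ?thesis .
  qed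
  define X' where "X' = X * 2^nat(tx - tm)"
  define Z' where "Z' = Z * 2^nat(tz - tm)"
  have xu: "x = u * real X'" unfolding X'_def using X(3) pw[of tx] by (simp add: tm_def)
  have zu: "z = u * real Z'" unfolding Z'_def using Z(3) pw[of tz] by (simp add: tm_def)
  have "Z' \<le> X'" using zx xu zu u0 by simp
  define D where "D = X' - Z'"
  have dD: "x - z = u * real D" unfolding D_def using \<open>Z' \<le> X'\<close> xu zu by (simp add: of_nat_diff right_diff_distrib)
  obtain n where n1: "\<epsilon>^2*M/2 \<le> u*2^n" and n2: "n = 0 \<or> u * 2^n \<le> \<epsilon>*z"
  proof (cases "u > \<epsilon>*z")
    case True
    have "\<epsilon>^2*M \<le> \<epsilon> * z" using mult_left_mono[OF eMz, of \<epsilon>] ep by (simp add: power2_eq_square mult.assoc)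
    moreover have "\<epsilon>^2*M \<ge> 0" using M0 by simp
    ultimately have "\<epsilon>^2*M/2 \<le> \<epsilon> * z" by linarith
    then show ?thesis using that[of 0] True by simp
  next
    case False
    obtain n0 where "\<epsilon>*z/u < 2^n0" using real_arch_pow[of 2 "\<epsilon>*z/u"] by auto
    define n1 where "n1 = (LEAST n. \<epsilon>*z < u*2^n)"
    have "\<epsilon>*z < u*2^n0" using \<open>\<epsilon>*z/u < 2^n0\<close> u0 by (simp add: field_simps)
    then have A: "\<epsilon>*z < u*2^n1" unfolding n1_def by (rule LeastI)
    have "n1 \<noteq> 0" proof assume "n1 = 0" then show False using A False by simp qed
    then obtain n where n: "n1 = Suc n" using not0_implies_Suc by blast
    have B: "\<not> \<epsilon>*z < u*2^n" using n not_less_Least[of n "\<lambda>n. \<epsilon>*z < u*2^n"] unfolding n1_def by simp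
    have "\<epsilon>^2*M \<le> \<epsilon> * z" using mult_left_mono[OF eMz, of \<epsilon>] ep by (simp add: power2_eq_square mult.assoc)
    then have "\<epsilon>^2*M/2 \<le> u*2^n" using A n by simp
    then show ?thesis using that[of n] B by simp
  qed
  define p :: nat where "p = 2^n"
  define a where "a = u * real (D mod p)"
  define b where "b = u * real p * real (D div p)"
  have p0: "p > 0" unfolding p_def by simp
  have sum: "x = z + a + b"
  proof -
    have "real D = real (D mod p) + real p * real (D div p)"
      by (metis mod_mult_div_eq of_nat_add of_nat_mult)
    then show ?thesis using dD unfolding a_def b_def by (simp add: algebra_simps)
  qed
  have a0: "a \<ge> 0" "b \<ge> 0" unfolding a_def b_def using u0 by auto
  have a1: "a < 1" "b < 1" using sum a0 z0 x0 by auto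
  have aez: "a \<le> \<epsilon> * z"
  proof (cases "n = 0")
    case True then show ?thesis unfolding a_def p_def using ep z0 by simp
  next
    case False
    have "real (D mod p) \<le> real p" using p0 by simp
    then have "a \<le> u * real p" unfolding a_def using u0 by simp
    then show ?thesis using n2 False unfolding p_def by simp
  qed
  have pN: "p \<le> N"
  proof (cases "n = 0")
    case True then show ?thesis unfolding p_def N_def by simp
  next
    case False
    have "\<epsilon> * z \<le> \<epsilon> * M" using zx xM ep by simp
    then have "u * real p \<le> \<epsilon> * M" using n2 False unfolding p_def by simp
    also have "\<epsilon> * M = real N * (\<epsilon>^3*M/2)" using NN ep by (simp add: field_simps power2_eq_square power3_eq_cube)
    also have "\<dots> \<le> real N * u" using uM by (intro mult_left_mono) auto
    finally have "real p \<le> real N" using u0 by (simp add: mult.commute)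
    then show ?thesis by simp
  qed
  have aG: "a \<in> grid \<epsilon> \<union> {0}"
  proof (cases "D mod p = 0")
    case True then show ?thesis unfolding a_def by simp
  next
    case False
    have "D mod p < N" using pN p0 by (meson mod_less_divisor order_less_le_trans)
    then have "D mod p + 1 \<le> N" by simp
    then have "real (D mod p) + 1 \<le> real N" by (metis of_nat_1 of_nat_add of_nat_le_iff)
    then have "real (D mod p) \<le> 2/\<epsilon>^2 - 1" using NN by simp
    moreover have "a > 0" unfolding a_def using False u0 by simp
    ultimately have "a \<in> grid \<epsilon>" unfolding grid_char[OF e] using a1 False
      by (intro conjI exI[of _ tm] exI[of _ "D mod p"]) (auto simp: a_def u_def)
    then show ?thesis by simp
  qed
  have aM: "a = 0 \<or> a \<ge> \<epsilon>^3 * M / 2"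
  proof (cases "D mod p = 0")
    case True then show ?thesis unfolding a_def by simp
  next
    case False
    then have "real (D mod p) \<ge> 1" by simp
    then have "a \<ge> u" unfolding a_def using u0 by simp
    then show ?thesis using uM by simp
  qed
  have q: "u * real p = 2 powi (tm + int n)" unfolding u_def p_def by (subst power_int_add) auto
  have bb: "b = 0 \<or> (b \<in> grid \<epsilon> \<and> b \<ge> \<epsilon>^3 * M / 2)"
  proof (cases "D div p = 0")
    case True then show ?thesis unfolding b_def by simp
  next
    case False
    have qM: "\<epsilon>^2*M/2 \<le> u * real p" using n1 unfolding p_def by simp
    have dpD: "real (D div p) * real p \<le> real D"
      using div_times_less_eq_dividend[of D p] by (metis of_nat_le_iff of_nat_mult)
    have "real (D div p) * (u * real p) \<le> u * real D" using mult_left_mono[OF dpD, of u] u0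
      by (simp add: algebra_simps)
    also have "\<dots> < M" using dD z0 xM by linarith
    also have "M = real N * (\<epsilon>^2*M/2)" using NN ep by (simp add: field_simps power2_eq_square)
    also have "\<dots> \<le> real N * (u * real p)" using qM by (intro mult_left_mono) auto
    finally have lt: "real (D div p) * (u * real p) < real N * (u * real p)" .
    have qpos: "0 \<le> u * real p" using u0 p0 by simp
    have "real (D div p) < real N" by (rule mult_right_less_imp_less[OF lt qpos])
    then have "D div p < N" by simp
    then have "D div p + 1 \<le> N" by simp
    then have "real (D div p) + 1 \<le> real N" by (metis of_nat_1 of_nat_add of_nat_le_iff)
    then have j: "real (D div p) \<le> 2/\<epsilon>^2 - 1" using NN by simp
    have b0: "b > 0" unfolding b_def using False u0 p0 by simp
    have bq: "b = 2 powi (tm + int n) * real (D div p)" unfolding b_def using q by simp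
    have "b \<in> grid \<epsilon>" unfolding grid_char[OF e] using a1 b0 j bq False
      by (intro conjI exI[of _ "tm + int n"] exI[of _ "D div p"]) auto
    moreover have "b \<ge> u * real p" unfolding b_def using False u0 p0 by simp
    moreover have "u * real p \<ge> u" using u0 p0 by simp
    ultimately show ?thesis using uM by simp
  qed
  have bG: "b \<in> grid \<epsilon> \<union> {0}" and bM: "b = 0 \<or> b \<ge> \<epsilon>^3 * M / 2" using bb by auto
  show ?thesis by (rule exI[of _ a], rule exI[of _ b]) (intro conjI aG bG sum aM bM aez)
qed


theorem claim7:
  fixes m :: nat and \<epsilon> z :: real and x :: "nat \<Rightarrow> real"
  assumes "m \<ge> 2"
    and "\<epsilon> \<le> 1 / (2^(3*m) * (4 * real m))"
    and "\<exists>k::int. \<epsilon> = (2::real) powi k"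
    and "z \<in> grid \<epsilon>"
    and "\<forall>i\<in>{1..m}. x i \<in> grid \<epsilon>"
    and "\<epsilon> * Max (x ` {1..m}) \<le> z"
    and "z \<le> Min (x ` {1..m})"
  shows "\<exists>a b :: nat \<Rightarrow> real. \<forall>i\<in>{1..m}.
           a i \<in> grid \<epsilon> \<union> {0} \<and> b i \<in> grid \<epsilon> \<union> {0} \<and>
           x i = z + a i + b i \<and>
           (a i = 0 \<or> a i \<ge> \<epsilon>^3 * Max (x ` {1..m}) / 2) \<and>
           (b i = 0 \<or> b i \<ge> \<epsilon>^3 * Max (x ` {1..m}) / 2) \<and>
           a i \<le> \<epsilon> * z"
proof -
  obtain k :: int where e: "\<epsilon> = 2 powi k" using assms(3) by blast
  have d1: "(1::real) \<le> 2^(3*m) * (4 * real m)"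
  proof -
    have A: "(1::real) \<le> 2^(3*m)" by simp
    have B: "(1::real) \<le> 4 * real m" using assms(1) by simp
    show ?thesis using mult_mono[OF A B] by simp
  qed
  have "1 / (2^(3*m) * (4 * real m)) \<le> (1::real)" using d1 assms(1) by (intro divide_le_eq_1_pos[THEN iffD2]) auto
  then have e1: "\<epsilon> \<le> 1" using assms(2) by linarith
  define M where "M = Max (x ` {1..m})"
  have ne: "x ` {1..m} \<noteq> {}" using assms(1) by auto
  have H: "\<forall>i\<in>{1..m}. \<exists>a b. a \<in> grid \<epsilon> \<union> {0} \<and> b \<in> grid \<epsilon> \<union> {0} \<and> x i = z + a + b \<and>
           (a = 0 \<or> a \<ge> \<epsilon>^3 * M / 2) \<and> (b = 0 \<or> b \<ge> \<epsilon>^3 * M / 2) \<and> a \<le> \<epsilon> * z"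
  proof
    fix i assume i: "i \<in> {1..m}"
    have "x i \<le> M" unfolding M_def using i by (intro Max_ge) auto
    moreover have "z \<le> x i" using assms(7) i by (meson Min_le finite_atLeastAtMost finite_imageI image_eqI order_trans)
    ultimately show "\<exists>a b. a \<in> grid \<epsilon> \<union> {0} \<and> b \<in> grid \<epsilon> \<union> {0} \<and> x i = z + a + b \<and>
           (a = 0 \<or> a \<ge> \<epsilon>^3 * M / 2) \<and> (b = 0 \<or> b \<ge> \<epsilon>^3 * M / 2) \<and> a \<le> \<epsilon> * z"
      using core[OF e e1 assms(4), of "x i" M] assms(5,6) i unfolding M_def by blast
  qed
  then have "\<exists>a. \<forall>i\<in>{1..m}. \<exists>b. a i \<in> grid \<epsilon> \<union> {0} \<and> b \<in> grid \<epsilon> \<union> {0} \<and> x i = z + a i + b \<and>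
           (a i = 0 \<or> a i \<ge> \<epsilon>^3 * M / 2) \<and> (b = 0 \<or> b \<ge> \<epsilon>^3 * M / 2) \<and> a i \<le> \<epsilon> * z"
    by (rule bchoice)
  then obtain a where "\<forall>i\<in>{1..m}. \<exists>b. a i \<in> grid \<epsilon> \<union> {0} \<and> b \<in> grid \<epsilon> \<union> {0} \<and> x i = z + a i + b \<and>
           (a i = 0 \<or> a i \<ge> \<epsilon>^3 * M / 2) \<and> (b = 0 \<or> b \<ge> \<epsilon>^3 * M / 2) \<and> a i \<le> \<epsilon> * z" by blast
  then have "\<exists>b. \<forall>i\<in>{1..m}. a i \<in> grid \<epsilon> \<union> {0} \<and> b i \<in> grid \<epsilon> \<union> {0} \<and> x i = z + a i + b i \<and>
           (a i = 0 \<or> a i \<ge> \<epsilon>^3 * M / 2) \<and> (b i = 0 \<or> b i \<ge> \<epsilon>^3 * M / 2) \<and> a i \<le> \<epsilon> * z"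
    by (rule bchoice)
  then show ?thesis unfolding M_def by blast
qed

end
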